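(* Under the standing setting and assumptions (A1)–(A3) described in the context, assume $\mathcal A$ is polyhedral and represented by $\varphi_1,\dots,\varphi_m\in\mathcal X'_+$, and for $X\in\mathcal X$ set $I_{\mathcal A}(X)=\{i\in\{1,\dots,m\}: \varphi_i(X)=\sigma_{\mathcal A}(\varphi_i)\}$. Then the following are equivalent: (a) $|\mathcal R(X)|=1$ for every $X\in\mathcal X$; (b) $\ker(\pi)\cap\bigcap_{i\in I_{\mathcal A}(X)}\ker(\varphi_i)=\{0\}$ for every $X\in\partial\mathcal A\cap\partial(\mathcal A+\ker(\pi))$.
   Context: Let $\mathcal X$ be a Hausdorff, first countable, locally convex topological vector space over $\mathbb R$ with dual $\mathcal X'$, partially ordered by a partial order $\geq$ with positive cone $\mathcal X_+=\{X\in\mathcal X: X\geq 0\}$, and $\mathcal X'_+=\{\varphi\in\mathcal X':\varphi(X)\geq0\ \forall X\in\mathcal X_+\}$. Let $\mathcal M\subset\mathcal X$ be a vector subspace with $1<\dim\mathcal M<\infty$, carrying the relative topology, and let $\pi:\mathcal M\to\mathbb R$ be linear with $\ker(\pi)=\{Z\in\mathcal M:\pi(Z)=0\}$. Standing assumptions: (A1) there is $U\in\mathcal M\cap\mathcal X_+$ with $\pi(U)=1$; (A2) $\mathcal A\subsetneq\mathcal X$ is closed, contains $0$, and satisfies $\mathcal A+\mathcal X_+\subset\mathcal A$; (A3) the map $\rho(X)=\inf\{\pi(Z): Z\in\mathcal M,\ X+Z\in\mathcal A\}$ is finitely valued and continuous on $\mathcal X$. The optimal payoff map is $\mathcal R(X)=\{Z\in\mathcal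 M: X+Z\in\mathcal A,\ \pi(Z)=\rho(X)\}$; $|\cdot|$ is cardinality. The support function is $\sigma_{\mathcal A}(\varphi)=\inf_{X\in\mathcal A}\varphi(X)$. $\mathcal A$ is polyhedral and represented by $\varphi_1,\dots,\varphi_m$ if $\mathcal A=\bigcap_{i=1}^m\{X\in\mathcal X:\varphi_i(X)\geq\alpha_i\}$ for some $\alpha_i\in\mathbb R$ (equivalently, $\mathcal A=\bigcap_{i=1}^m\{X:\varphi_i(X)\geq\sigma_{\mathcal A}(\varphi_i)\}$). $\ker(\varphi_i)$ is the kernel of $\varphi_i$. $\partial$ denotes boundary in $\mathcal X$. *)

theory Defs
  imports "HOL-Analysis.Analysis"
begin

definition lctvs :: "'a::{real_vector,topological_space} itself \<Rightarrow> bool" where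
  "lctvs _ \<longleftrightarrow>
     continuous_on UNIV (\<lambda>p::'a \<times> 'a. fst p + snd p) \<and>
     continuous_on UNIV (\<lambda>p::real \<times> 'a. fst p *\<^sub>R snd p) \<and>
     (\<forall>U::'a set. open U \<and> 0 \<in> U \<longrightarrow> (\<exists>V. open V \<and> convex V \<and> 0 \<in> V \<and> V \<subseteq> U))"

definition tdual :: "('a::{real_vector,topological_space} \<Rightarrow> real) set" where
  "tdual = {\<phi>. linear \<phi> \<and> continuous_on UNIV \<phi>}"

text \<open>Positive cone of a partial order given as a relation (ge X Y means X \<ge> Y).\<close>
definition pos_cone :: "('a::real_vector \<Rightarrow> 'a \<Rightarrow> bool) \<Rightarrow> 'a set" where
  "pos_cone ge = {X. ge X 0}"

definition pos_dual :: "('a::{real_vector,topological_space} \<Rightarrow> 'a \<Rightarrow> bool) \<Rightarrow> ('a \<Rightarrow> real) set" where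
  "pos_dual ge = {\<phi> \<in> tdual. \<forall>X \<in> pos_cone ge. \<phi> X \<ge> 0}"

definition kerM :: "'a set \<Rightarrow> ('a \<Rightarrow> real) \<Rightarrow> 'a set" where
  "kerM M \<pi> = {Z \<in> M. \<pi> Z = 0}"

definition rho :: "'a::real_vector set \<Rightarrow> 'a set \<Rightarrow> ('a \<Rightarrow> real) \<Rightarrow> 'a \<Rightarrow> real" where
  "rho A M \<pi> X = Inf {\<pi> Z | Z. Z \<in> M \<and> X + Z \<in> A}"

definition optR :: "'a::real_vector set \<Rightarrow> 'a set \<Rightarrow> ('a \<Rightarrow> real) \<Rightarrow> 'a \<Rightarrow> 'a set" where
  "optR A M \<pi> X = {Z \<in> M. X + Z \<in> A \<and> \<pi> Z = rho A M \<pi> X}"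

definition supp_fun :: "'a set \<Rightarrow> ('a \<Rightarrow> real) \<Rightarrow> real" where
  "supp_fun A \<phi> = Inf (\<phi> ` A)"

definition active_set :: "'a set \<Rightarrow> nat \<Rightarrow> (nat \<Rightarrow> 'a \<Rightarrow> real) \<Rightarrow> 'a \<Rightarrow> nat set" where
  "active_set A m \<phi> X = {i \<in> {1..m}. \<phi> i X = supp_fun A (\<phi> i)}"

end

theory Submission imports Defs begin

lemma lin_vanish_span:
  fixes g :: "'a::real_vector \<Rightarrow> real"
  assumes "linear g" "\<And>x. x \<in> B \<Longrightarrow> g x = 0" "x \<in> span B"
  shows "g x = 0"
  using linear_eq_0_on_span[OF assms(1)] assms(2,3) by blast

lemma span_ker_reduce:
  fixes g :: "'a::real_vector \<Rightarrow> real"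
  assumes g: "linear g" and b0: "b0 \<in> B" "g b0 \<noteq> 0" and x: "x \<in> span B"
  shows "x - (g x / g b0) *\<^sub>R b0 \<in> span ((\<lambda>b. b - (g b / g b0) *\<^sub>R b0) ` (B - {b0}))"
  using x
proof (induction rule: span_induct)
  case base
  let ?S = "span ((\<lambda>b. b - (g b / g b0) *\<^sub>R b0) ` (B - {b0}))"
  show ?case unfolding subspace_def
  proof (intro conjI allI impI ballI)
    show "0 \<in> Collect (\<lambda>x. x - (g x / g b0) *\<^sub>R b0 \<in> ?S)"
      using linear_0[OF g] by (simp add: span_zero)
  next
    fix x y assume "x \<in> Collect (\<lambda>x. x - (g x / g b0) *\<^sub>R b0 \<in> ?S)" "y \<in> Collect (\<lambda>x. x - (g x / g b0) *\<^sub>R b0 \<in> ?S)"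
    then have "(x - (g x / g b0) *\<^sub>R b0) + (y - (g y / g b0) *\<^sub>R b0) \<in> ?S" by (simp add: span_add)
    moreover have "(x - (g x / g b0) *\<^sub>R b0) + (y - (g y / g b0) *\<^sub>R b0) = (x+y) - (g (x+y) / g b0) *\<^sub>R b0"
      using linear_add[OF g] by (simp add: add_divide_distrib scaleR_add_left algebra_simps)
    ultimately show "x + y \<in> Collect (\<lambda>x. x - (g x / g b0) *\<^sub>R b0 \<in> ?S)" by simp
  next
    fix c x assume "x \<in> Collect (\<lambda>x. x - (g x / g b0) *\<^sub>R b0 \<in> ?S)"
    then have "c *\<^sub>R (x - (g x / g b0) *\<^sub>R b0) \<in> ?S" by (simp add: span_scale)
    moreover have "c *\<^sub>R (x - (g x / g b0) *\<^sub>R b0) = c *\<^sub>R x - (g (c *\<^sub>R x) / g b0) *\<^sub>R b0"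
      using linear_scale[OF g] by (simp add: algebra_simps)
    ultimately show "c *\<^sub>R x \<in> Collect (\<lambda>x. x - (g x / g b0) *\<^sub>R b0 \<in> ?S)" by simp
  qed
next
  case (step x)
  show ?case
  proof (cases "x = b0")
    case True then show ?thesis using b0 by (simp add: span_zero)
  next
    case False then show ?thesis using step by (intro span_base) auto
  qed
qed

lemma finite_argmin:
  fixes h :: "'i \<Rightarrow> real"
  assumes "finite K" "K \<noteq> {}"
  shows "\<exists>j\<in>K. \<forall>i\<in>K. h j \<le> h i"
proof -
  have "Min (h ` K) \<in> h ` K" using assms by simp
  then obtain j where "j \<in> K" "h j = Min (h ` K)" by auto
  then show ?thesis using assms by (intro bexI[of _ j]) auto
qed

lemma lp_attain:
  fixes f :: "'a::real_vector \<Rightarrow> real" and g :: "'i \<Rightarrow> 'a \<Rightarrow> real"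
  assumes "finite B" "finite J"
    "\<forall>j\<in>J. linear (g j)"
    "\<forall>x\<in>span B. \<forall>y\<in>span B. f (x+y) = f x + f y"
    "\<forall>c. \<forall>x\<in>span B. f (c *\<^sub>R x) = c * f x"
    "u0 \<in> span B" "\<forall>j\<in>J. g j (w + u0) \<ge> b j"
    "\<forall>u\<in>span B. (\<forall>j\<in>J. g j (w+u) \<ge> b j) \<longrightarrow> f u \<ge> L"
  shows "\<exists>u\<in>span B. (\<forall>j\<in>J. g j (w+u) \<ge> b j) \<and>
           (\<forall>v\<in>span B. (\<forall>j\<in>J. g j (w+v) \<ge> b j) \<longrightarrow> f u \<le> f v)"
  using assms
proof (induction "card B" arbitrary: B w u0 L rule: less_induct)
  case less
  note finB = less.prems(1) and finJ = less.prems(2) and lin = less.prems(3)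
    and fadd = less.prems(4) and fsc = less.prems(5) and u0 = less.prems(6,7)
    and bnd = less.prems(8)
  define S where "S = {u\<in>span B. \<forall>j\<in>J. g j (w+u) \<ge> b j}"
  have u0S: "u0 \<in> S" using u0 by (simp add: S_def)
  have bndS: "\<And>u. u \<in> S \<Longrightarrow> f u \<ge> L" using bnd by (auto simp: S_def)
  show ?case
  proof (cases "\<forall>x\<in>span B. f x = 0")
    case True
    then show ?thesis using u0 by (intro bexI[of _ u0]) auto
  next
    case False
    then obtain x where x: "x \<in> span B" "f x \<noteq> 0" by blast
    define d where "d = (- f x) *\<^sub>R x"
    have dB: "d \<in> span B" using x(1) unfolding d_def by (rule span_scale)
    have fd: "f d < 0"
    proof -
      have "f d = (- f x) * f x" using fsc x(1) unfolding d_def by blast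
      then show ?thesis using x(2) by (simp add: not_square_less_zero) (smt (verit) zero_less_mult_iff)
    qed
    have fz: "f (z + t *\<^sub>R d) = f z + t * f d" if "z \<in> span B" for z t
      using fadd fsc that dB span_scale by (metis)
    have gz: "g j (w + (z + t *\<^sub>R d)) = g j (w + z) + t * g j d" if "j \<in> J" for j z t
      using lin that by (simp add: linear_add linear_scale algebra_simps)
    have descent: "\<exists>j\<in>J. g j d < 0 \<and> (\<exists>q\<in>S. g j (w+q) = b j \<and> f q \<le> f z)" if zS: "z \<in> S" for z
    proof -
      define Jn where "Jn = {j\<in>J. g j d < 0}"
      have finJn: "finite Jn" using finJ by (simp add: Jn_def)
      have zB: "z \<in> span B" and zc: "\<forall>j\<in>J. g j (w+z) \<ge> b j" using zS by (auto simp: S_def)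
      show ?thesis
      proof (cases "Jn = {}")
        case True
        define t where "t = (f z - L + 1) / (- f d)"
        have t0: "t \<ge> 0" using bndS[OF zS] fd by (simp add: t_def divide_nonneg_neg)
        have "z + t *\<^sub>R d \<in> S"
          unfolding S_def
        proof (intro CollectI conjI ballI)
          show "z + t *\<^sub>R d \<in> span B" using zB dB by (simp add: span_add span_scale)
        next
          fix j assume j: "j \<in> J"
          have "g j d \<ge> 0" using True j by (auto simp: Jn_def)
          then show "b j \<le> g j (w + (z + t *\<^sub>R d))" using gz[OF j] zc j t0
            by (smt (verit) mult_nonneg_nonneg)
        qed
        moreover have "f (z + t *\<^sub>R d) = L - 1"
        proof -
          have "t * f d = - (f z - L + 1)" using fd unfolding t_def by (simp add: field_simps)
          then show ?thesis using fz[OF zB, of t] by linarith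
        qed
        ultimately have False using bndS[of "z + t *\<^sub>R d"] by linarith
        then show ?thesis ..
      next
        case False
        define r where "r j = (g j (w+z) - b j) / (- g j d)" for j
        obtain j where j: "j \<in> Jn" "\<forall>i\<in>Jn. r j \<le> r i"
          using finite_argmin[OF finJn False, of r] by blast
        have jJ: "j \<in> J" and gjd: "g j d < 0" using j by (auto simp: Jn_def)
        have r0: "r j \<ge> 0" using zc jJ gjd by (simp add: r_def divide_nonneg_neg)
        define q where "q = z + r j *\<^sub>R d"
        have qS: "q \<in> S" unfolding S_def
        proof (intro CollectI conjI ballI)
          show "q \<in> span B" using zB dB by (simp add: q_def span_add span_scale)
        next
          fix i assume i: "i \<in> J"
          show "b i \<le> g i (w + q)"
          proof (cases "g i d < 0")
            case True
            then have "i \<in> Jn" using i by (simp add: Jn_def)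
            then have "r j \<le> r i" using j by blast
            then have "r j * (- g i d) \<le> r i * (- g i d)" using True by (simp add: mult_right_mono)
            moreover have "r i * (- g i d) = g i (w+z) - b i" using True by (simp add: r_def)
            ultimately show ?thesis using gz[OF i] by (simp add: q_def)
          next
            case False
            then show ?thesis using gz[OF i] zc i r0 unfolding q_def
              by (smt (verit) mult_nonneg_nonneg)
          qed
        qed
        have "r j * g j d = - (g j (w+z) - b j)" using gjd unfolding r_def by (simp add: field_simps)
        then have "g j (w + q) = b j" using gz[OF jJ, of z "r j"] unfolding q_def by linarith
        moreover have "f q \<le> f z" using fz[OF zB] fd r0 by (simp add: q_def mult_nonneg_nonpos)
        ultimately show ?thesis using jJ gjd qS by blast
      qed
    qed
    have face: "\<exists>q\<in>S. g j (w+q) = b j \<and> (\<forall>q'\<in>S. g j (w+q') = b j \<longrightarrow> f q \<le> f q')"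
      if j: "j \<in> J" "g j d < 0" and ne: "\<exists>q\<in>S. g j (w+q) = b j" for j
    proof -
      have gl: "linear (g j)" using lin j by blast
      obtain b0 where b0: "b0 \<in> B" "g j b0 \<noteq> 0"
        using lin_vanish_span[OF gl _ dB] j(2) by force
      define B' where "B' = (\<lambda>b. b - (g j b / g j b0) *\<^sub>R b0) ` (B - {b0})"
      have cardB': "card B' < card B"
        using finB b0 unfolding B'_def
        by (meson card_Diff1_less card_image_le finite_Diff le_less_trans)
      have B'sub: "B' \<subseteq> span B" unfolding B'_def
      proof
        fix y assume "y \<in> (\<lambda>b. b - (g j b / g j b0) *\<^sub>R b0) ` (B - {b0})"
        then obtain c where c: "c \<in> B" "y = c - (g j c / g j b0) *\<^sub>R b0" by blast
        have "c \<in> span B" "b0 \<in> span B" using c b0 by (auto intro: span_base)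
        then show "y \<in> span B" unfolding c(2) by (intro span_diff span_scale)
      qed
      have spanB': "span B' \<subseteq> span B" using B'sub by (simp add: span_minimal)
      have g0B': "g j y = 0" if "y \<in> span B'" for y
      proof (rule lin_vanish_span[OF gl _ that])
        fix x assume "x \<in> B'"
        then show "g j x = 0" using b0 unfolding B'_def by (auto simp: linear_diff[OF gl] linear_scale[OF gl])
      qed
      obtain q0 where q0: "q0 \<in> S" "g j (w+q0) = b j" using ne by blast
      have q0B: "q0 \<in> span B" and q0c: "\<forall>i\<in>J. g i (w+q0) \<ge> b i" using q0 by (auto simp: S_def)
      have IH: "\<exists>u\<in>span B'. (\<forall>i\<in>J. g i ((w+q0)+u) \<ge> b i) \<and>
           (\<forall>v\<in>span B'. (\<forall>i\<in>J. g i ((w+q0)+v) \<ge> b i) \<longrightarrow> f u \<le> f v)"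
      proof (rule less.hyps[OF cardB'])
        show "finite B'" using finB by (simp add: B'_def)
        show "finite J" by fact
        show "\<forall>j\<in>J. linear (g j)" by fact
        show "\<forall>x\<in>span B'. \<forall>y\<in>span B'. f (x+y) = f x + f y" using fadd spanB' by blast
        show "\<forall>c. \<forall>x\<in>span B'. f (c *\<^sub>R x) = c * f x" using fsc spanB' by blast
        show "0 \<in> span B'" by (simp add: span_zero)
        show "\<forall>i\<in>J. g i (w + q0 + 0) \<ge> b i" using q0c by simp
        show "\<forall>u\<in>span B'. (\<forall>i\<in>J. g i (w + q0 + u) \<ge> b i) \<longrightarrow> f u \<ge> L - f q0"
        proof (intro ballI impI)
          fix u assume u: "u \<in> span B'" "\<forall>i\<in>J. g i (w + q0 + u) \<ge> b i"
          have uB: "u \<in> span B" using u spanB' by blast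
          have "q0 + u \<in> S" using u uB q0B by (auto simp: S_def span_add add.assoc)
          then have "f (q0 + u) \<ge> L" by (rule bndS)
          then show "f u \<ge> L - f q0" using fadd q0B uB by simp
        qed
      qed
      then obtain u where u: "u \<in> span B'" "\<forall>i\<in>J. g i ((w+q0)+u) \<ge> b i"
        "\<forall>v\<in>span B'. (\<forall>i\<in>J. g i ((w+q0)+v) \<ge> b i) \<longrightarrow> f u \<le> f v" by blast
      have uB: "u \<in> span B" using u spanB' by blast
      show ?thesis
      proof (intro bexI[of _ "q0 + u"] conjI ballI impI)
        show "q0 + u \<in> S" using u uB q0B by (auto simp: S_def span_add add.assoc)
        show "g j (w + (q0 + u)) = b j"
          using q0 g0B'[OF u(1)] linear_add[OF gl] by (simp add: add.assoc[symmetric])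
        fix q' assume q': "q' \<in> S" "g j (w + q') = b j"
        have q'B: "q' \<in> span B" and q'c: "\<forall>i\<in>J. g i (w+q') \<ge> b i" using q' by (auto simp: S_def)
        have dq: "q' - q0 \<in> span B" using q'B q0B by (simp add: span_diff)
        have "g j (q' - q0) = 0"
          using q'(2) q0(2) linear_diff[OF gl, of q' q0] linear_add[OF gl, of w q'] linear_add[OF gl, of w q0] by simp
        then have "q' - q0 \<in> span B'"
          using span_ker_reduce[OF gl b0 dq] by (simp add: B'_def)
        moreover have "\<forall>i\<in>J. g i ((w+q0)+(q' - q0)) \<ge> b i" using q'c by simp
        ultimately have "f u \<le> f (q' - q0)" using u(3) by blast
        moreover have "f (q0 + (q' - q0)) = f q0 + f (q' - q0)" using fadd q0B dq by blast
        then have "f q' = f q0 + f (q' - q0)" by simp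
        moreover have "f (q0 + u) = f q0 + f u" using fadd q0B uB by blast
        ultimately show "f (q0 + u) \<le> f q'" by simp
      qed
    qed
    define K where "K = {j\<in>J. g j d < 0 \<and> (\<exists>q\<in>S. g j (w+q) = b j)}"
    have "\<forall>j\<in>K. \<exists>q. q\<in>S \<and> g j (w+q) = b j \<and> (\<forall>q'\<in>S. g j (w+q') = b j \<longrightarrow> f q \<le> f q')"
      using face by (auto simp: K_def)
    then obtain qf where qf: "\<And>j. j \<in> K \<Longrightarrow> qf j \<in> S \<and> g j (w + qf j) = b j \<and>
        (\<forall>q'\<in>S. g j (w+q') = b j \<longrightarrow> f (qf j) \<le> f q')" by metis
    have finK: "finite K" using finJ by (simp add: K_def)
    have Kne: "K \<noteq> {}" using descent[OF u0S] by (auto simp: K_def)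
    obtain j where j: "j \<in> K" "\<forall>i\<in>K. f (qf j) \<le> f (qf i)"
      using finite_argmin[OF finK Kne, of "\<lambda>i. f (qf i)"] by blast
    show ?thesis
    proof (rule bexI[of _ "qf j"], rule conjI)
      show "qf j \<in> span B" "\<forall>i\<in>J. b i \<le> g i (w + qf j)" using qf[OF j(1)] by (auto simp: S_def)
      show "\<forall>v\<in>span B. (\<forall>i\<in>J. b i \<le> g i (w + v)) \<longrightarrow> f (qf j) \<le> f v"
      proof (intro ballI impI)
      fix v assume v: "v \<in> span B" "\<forall>i\<in>J. b i \<le> g i (w + v)"
      then have vS: "v \<in> S" by (simp add: S_def)
      obtain i q where i: "i \<in> J" "g i d < 0" "q \<in> S" "g i (w+q) = b i" "f q \<le> f v"
        using descent[OF vS] by blast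
      have iK: "i \<in> K" using i by (auto simp: K_def)
      have "f (qf i) \<le> f q" using qf[OF iK] i by blast
      then show "f (qf j) \<le> f v" using j(2) iK i(5) by fastforce
      qed
    qed
  qed
qed

theorem mainTheorem12:
  fixes ge :: "'a::{real_vector, t2_space, first_countable_topology} \<Rightarrow> 'a \<Rightarrow> bool"
    and M A :: "'a set"
    and \<pi> :: "'a \<Rightarrow> real"
    and m :: nat
    and \<phi> :: "nat \<Rightarrow> 'a \<Rightarrow> real"
  assumes tvs: "lctvs TYPE('a)"
    and order: "partial_order_on UNIV {(x, y). ge y x}"
    and M_sub: "subspace M"
    and M_dim: "1 < dim M"
    and \<pi>_add: "\<And>Y Z. Y \<in> M \<Longrightarrow> Z \<in> M \<Longrightarrow> \<pi> (Y + Z) = \<pi> Y + \<pi> Z"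
    and \<pi>_scale: "\<And>c Z. Z \<in> M \<Longrightarrow> \<pi> (c *\<^sub>R Z) = c * \<pi> Z"
    and A1: "\<exists>U \<in> M \<inter> pos_cone ge. \<pi> U = 1"
    and A2: "closed A" "0 \<in> A" "A \<noteq> UNIV"
            "\<And>X P. X \<in> A \<Longrightarrow> P \<in> pos_cone ge \<Longrightarrow> X + P \<in> A"
    and A3: "\<And>X. {\<pi> Z | Z. Z \<in> M \<and> X + Z \<in> A} \<noteq> {}"
            "\<And>X. bdd_below {\<pi> Z | Z. Z \<in> M \<and> X + Z \<in> A}"
            "continuous_on UNIV (rho A M \<pi>)"
    and \<phi>_pos: "\<And>i. i \<in> {1..m} \<Longrightarrow> \<phi> i \<in> pos_dual ge"
    and poly: "\<exists>\<alpha> :: nat \<Rightarrow> real. A = (\<Inter>i\<in>{1..m}. {X. \<phi> i X \<ge> \<alpha> i})"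
  shows "(\<forall>X. card (optR A M \<pi> X) = 1) \<longleftrightarrow>
         (\<forall>X \<in> frontier A \<inter> frontier {Y + Z | Y Z. Y \<in> A \<and> Z \<in> kerM M \<pi>}.
            kerM M \<pi> \<inter> (\<Inter>i\<in>active_set A m \<phi> X. {Y. \<phi> i Y = 0}) = {0})"
proof -
  obtain \<alpha> :: "nat \<Rightarrow> real" where \<alpha>: "A = (\<Inter>i\<in>{1..m}. {X. \<phi> i X \<ge> \<alpha> i})" using poly by blast
  have Aiff: "X \<in> A \<longleftrightarrow> (\<forall>i\<in>{1..m}. \<phi> i X \<ge> \<alpha> i)" for X using \<alpha> by blast
  have \<phi>lin: "linear (\<phi> i)" if "i \<in> {1..m}" for i
    using \<phi>_pos[OF that] by (simp add: pos_dual_def tdual_def)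
  obtain U where U: "U \<in> M" "U \<in> pos_cone ge" "\<pi> U = 1" using A1 by blast
  have \<phi>U: "\<phi> i U \<ge> 0" if "i \<in> {1..m}" for i using \<phi>_pos[OF that] U(2) by (simp add: pos_dual_def)
  have \<pi>0: "\<pi> 0 = 0" using \<pi>_scale[of 0 0] subspace_0[OF M_sub] by simp
  have \<pi>diff: "\<pi> (Y - Z) = \<pi> Y - \<pi> Z" if "Y \<in> M" "Z \<in> M" for Y Z
  proof -
    have nz: "- Z \<in> M" using that M_sub by (simp add: subspace_neg)
    have "\<pi> (- Z) = - \<pi> Z" using \<pi>_scale[OF that(2), of "-1"] by simp
    moreover have "\<pi> (Y + - Z) = \<pi> Y + \<pi> (- Z)" using \<pi>_add[OF that(1) nz] .
    ultimately show ?thesis by simp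
  qed
  define K where "K = kerM M \<pi>"
  define AK where "AK = {Y + Z | Y Z. Y \<in> A \<and> Z \<in> K}"
  define \<rho> where "\<rho> = rho A M \<pi>"
  have F1: "\<rho> X \<le> \<pi> Z" if "Z \<in> M" "X + Z \<in> A" for X Z
    unfolding \<rho>_def rho_def using that by (intro cInf_lower[OF _ A3(2)]) auto
  have F1b: "\<exists>Z\<in>M. X + Z \<in> A \<and> \<pi> Z < c" if "\<rho> X < c" for X c
  proof -
    have "\<exists>v\<in>{\<pi> Z | Z. Z \<in> M \<and> X + Z \<in> A}. v < c"
      using cInf_lessD[OF A3(1), of X c] that unfolding \<rho>_def rho_def by blast
    then show ?thesis by blast
  qed
  have supp_lower: "supp_fun A (\<phi> i) \<le> \<phi> i Y" if "i \<in> {1..m}" "Y \<in> A" for i Y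
    unfolding supp_fun_def
  proof (rule cInf_lower)
    show "\<phi> i Y \<in> \<phi> i ` A" using that by blast
    show "bdd_below (\<phi> i ` A)" using Aiff that(1) by (intro bdd_belowI[of _ "\<alpha> i"]) auto
  qed
  have supp_ge: "\<alpha> i \<le> supp_fun A (\<phi> i)" if "i \<in> {1..m}" for i
    unfolding supp_fun_def using A2(2) Aiff that by (intro cInf_greatest) auto
  have neg_int: "X \<in> interior AK" if "\<rho> X < 0" for X
  proof -
    have "\<rho> -` {..<0} \<subseteq> AK"
    proof
      fix Y assume "Y \<in> \<rho> -` {..<0}"
      then obtain Z where Z: "Z \<in> M" "Y + Z \<in> A" "\<pi> Z < 0" using F1b by force
      define c where "c = - \<pi> Z"
      define Z' where "Z' = Z + c *\<^sub>R U"
      have Z'M: "Z' \<in> M" unfolding Z'_def using Z(1) U(1) M_sub by (simp add: subspace_add subspace_scale)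
      have cU: "c *\<^sub>R U \<in> M" using U(1) M_sub by (simp add: subspace_scale)
      have "\<pi> Z' = \<pi> Z + \<pi> (c *\<^sub>R U)" unfolding Z'_def using \<pi>_add[OF Z(1) cU] .
      also have "\<pi> (c *\<^sub>R U) = c" using \<pi>_scale[OF U(1)] U(3) by simp
      finally have "\<pi> Z' = 0" by (simp add: c_def)
      then have Z'K: "- Z' \<in> K" using Z'M \<pi>_scale[OF Z'M, of "-1"] M_sub
        by (simp add: K_def kerM_def subspace_neg)
      have "Y + Z' \<in> A" unfolding Aiff
      proof
        fix i assume i: "i \<in> {1..m}"
        have "\<phi> i (Y + Z') = \<phi> i (Y + Z) + c * \<phi> i U"
          unfolding Z'_def using \<phi>lin[OF i] by (simp add: linear_add linear_scale add.assoc)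
        moreover have "c * \<phi> i U \<ge> 0" using Z(3) \<phi>U[OF i] by (simp add: c_def mult_nonpos_nonneg)
        moreover have "\<phi> i (Y + Z) \<ge> \<alpha> i" using Z(2) i Aiff by blast
        ultimately show "\<phi> i (Y + Z') \<ge> \<alpha> i" by linarith
      qed
      moreover have "Y = (Y + Z') + (- Z')" by simp
      ultimately show "Y \<in> AK" unfolding AK_def using Z'K by blast
    qed
    moreover have "open (\<rho> -` {..<0})" using A3(3) by (simp add: \<rho>_def open_vimage)
    ultimately show ?thesis using that interior_maximal by blast
  qed
  have hcont: "continuous_on UNIV (\<lambda>t::real. X + t *\<^sub>R U)" for X
  proof -
    have add: "continuous_on UNIV (\<lambda>p::'a \<times> 'a. fst p + snd p)"
      and sm: "continuous_on UNIV (\<lambda>p::real \<times> 'a. fst p *\<^sub>R snd p)"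
      using tvs by (auto simp: lctvs_def)
    have "continuous_on UNIV (\<lambda>t::real. (t, U))" by (intro continuous_intros)
    then have c1: "continuous_on UNIV (\<lambda>t::real. t *\<^sub>R U)"
      using continuous_on_compose2[OF sm, of UNIV "\<lambda>t. (t, U)"] by simp
    have "continuous_on UNIV (\<lambda>t::real. (X, t *\<^sub>R U))" using c1 by (intro continuous_intros)
    then show ?thesis
      using continuous_on_compose2[OF add, of UNIV "\<lambda>t. (X, t *\<^sub>R U)"] by simp
  qed
  have int_neg: "\<exists>Z\<in>M. X + Z \<in> A \<and> \<pi> Z < 0" if XI: "X \<in> interior AK" for X
  proof -
    obtain Ob where Ob: "open Ob" "X \<in> Ob" "Ob \<subseteq> AK" using XI by (meson interiorE)
    have "open ((\<lambda>t::real. X + t *\<^sub>R U) -` Ob)" using Ob(1) hcont by (rule open_vimage)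
    moreover have "(0::real) \<in> (\<lambda>t::real. X + t *\<^sub>R U) -` Ob" using Ob(2) by simp
    ultimately obtain e :: real where e: "e > 0" "\<forall>y. dist y 0 < e \<longrightarrow> y \<in> (\<lambda>t::real. X + t *\<^sub>R U) -` Ob"
      unfolding open_dist by blast
    have "dist (- e/2) 0 < e" using e(1) by (simp add: dist_real_def)
    then have "X + (- e/2) *\<^sub>R U \<in> Ob" using e(2) by blast
    then have "X + (- e/2) *\<^sub>R U \<in> AK" using Ob(3) by blast
    then obtain Y Z' where YZ: "X + (- e/2) *\<^sub>R U = Y + Z'" "Y \<in> A" "Z' \<in> K" unfolding AK_def by blast
    have Z'M: "Z' \<in> M" "\<pi> Z' = 0" using YZ(3) by (auto simp: K_def kerM_def)
    define Z where "Z = (- e/2) *\<^sub>R U - Z'"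
    have eU: "(- e/2) *\<^sub>R U \<in> M" using subspace_scale[OF M_sub U(1)] .
    have ZM: "Z \<in> M" unfolding Z_def using subspace_diff[OF M_sub eU Z'M(1)] .
    have "X + Z = Y" unfolding Z_def using YZ(1) by (simp add: algebra_simps)
    moreover have "\<pi> Z = - e/2"
    proof -
      have "\<pi> Z = \<pi> ((- e/2) *\<^sub>R U) - \<pi> Z'" unfolding Z_def using \<pi>diff[OF eU Z'M(1)] .
      also have "\<pi> ((- e/2) *\<^sub>R U) = - e/2" using \<pi>_scale[OF U(1), of "- e/2"] U(3) by simp
      finally show ?thesis using Z'M(2) by simp
    qed
    ultimately show ?thesis using ZM YZ(2) e(1) by (intro bexI[of _ Z]) auto
  qed
  have AAK: "A \<subseteq> AK"
  proof
    fix Y assume "Y \<in> A"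
    moreover have "(0::'a) \<in> K" using \<pi>0 M_sub by (simp add: K_def kerM_def subspace_0)
    ultimately show "Y \<in> AK" unfolding AK_def by force
  qed
  have frA: "X \<in> A" if "X \<in> frontier A" for X
    using that A2(1) by (simp add: frontier_def closure_closed)
  show ?thesis
    unfolding K_def[symmetric] AK_def[symmetric]
  proof
    assume a: "\<forall>X. card (optR A M \<pi> X) = 1"
    show "\<forall>X \<in> frontier A \<inter> frontier AK. K \<inter> (\<Inter>i\<in>active_set A m \<phi> X. {Y. \<phi> i Y = 0}) = {0}"
    proof
      fix X assume X: "X \<in> frontier A \<inter> frontier AK"
      have XA: "X \<in> A" using X frA by blast
      have r1: "\<rho> X \<le> 0" using F1[of 0 X] XA \<pi>0 M_sub by (simp add: subspace_0)
      have r2: "\<not> \<rho> X < 0" using neg_int X by (auto simp: frontier_def)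
      have r0: "\<rho> X = 0" using r1 r2 by linarith
      show "K \<inter> (\<Inter>i\<in>active_set A m \<phi> X. {Y. \<phi> i Y = 0}) = {0}"
      proof
        show "{0} \<subseteq> K \<inter> (\<Inter>i\<in>active_set A m \<phi> X. {Y. \<phi> i Y = 0})"
          using \<pi>0 M_sub \<phi>lin by (auto simp: K_def kerM_def subspace_0 active_set_def linear_0)
      next
        show "K \<inter> (\<Inter>i\<in>active_set A m \<phi> X. {Y. \<phi> i Y = 0}) \<subseteq> {0}"
        proof
          fix W assume W: "W \<in> K \<inter> (\<Inter>i\<in>active_set A m \<phi> X. {Y. \<phi> i Y = 0})"
          have WM: "W \<in> M" "\<pi> W = 0" using W by (auto simp: K_def kerM_def)
          have Wact: "\<phi> i W = 0" if "i \<in> active_set A m \<phi> X" for i using W that by blast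
          show "W \<in> {0}"
          proof (rule ccontr)
            assume W0: "W \<notin> {0}"
            have ev: "\<forall>\<^sub>F t in at_right (0::real). \<alpha> i \<le> \<phi> i X + t * \<phi> i W" if i: "i \<in> {1..m}" for i
            proof (cases "i \<in> active_set A m \<phi> X")
              case True
              then show ?thesis using Wact XA Aiff i by (auto intro: always_eventually)
            next
              case False
              then have "\<phi> i X \<noteq> supp_fun A (\<phi> i)" using i by (simp add: active_set_def)
              then have "\<alpha> i < \<phi> i X" using supp_lower[OF i XA] supp_ge[OF i] by linarith
              moreover have "((\<lambda>t. \<phi> i X + t * \<phi> i W) \<longlongrightarrow> \<phi> i X + 0 * \<phi> i W) (at_right 0)"
                by (intro tendsto_intros)
              ultimately have "\<forall>\<^sub>F t in at_right (0::real). \<alpha> i < \<phi> i X + t * \<phi> i W"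
                using order_tendstoD(1) by fastforce
              then show ?thesis by (rule eventually_mono) simp
            qed
            have "\<forall>\<^sub>F t in at_right (0::real). \<forall>i\<in>{1..m}. \<alpha> i \<le> \<phi> i X + t * \<phi> i W"
              using ev by (intro eventually_ball_finite) auto
            then obtain bb :: real where bb: "bb > 0" "\<forall>y>0. y < bb \<longrightarrow> (\<forall>i\<in>{1..m}. \<alpha> i \<le> \<phi> i X + y * \<phi> i W)"
              unfolding eventually_at_right_field by blast
            define \<delta> where "\<delta> = bb / 2"
            have \<delta>: "\<delta> > 0" "\<forall>i\<in>{1..m}. \<alpha> i \<le> \<phi> i X + \<delta> * \<phi> i W" proof -
              show "\<delta> > 0" using bb(1) by (simp add: \<delta>_def)
              have "\<delta> < bb" using bb(1) by (simp add: \<delta>_def)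
              then show "\<forall>i\<in>{1..m}. \<alpha> i \<le> \<phi> i X + \<delta> * \<phi> i W" using bb(2) \<open>\<delta> > 0\<close> by blast
            qed
            have XdA: "X + \<delta> *\<^sub>R W \<in> A" unfolding Aiff
              using \<delta>(2) \<phi>lin by (simp add: linear_add linear_scale)
            have dM: "\<delta> *\<^sub>R W \<in> M" using WM M_sub by (simp add: subspace_scale)
            have o1: "0 \<in> optR A M \<pi> X" using XA r0 \<pi>0 M_sub
              by (simp add: optR_def subspace_0 \<rho>_def)
            have o2: "\<delta> *\<^sub>R W \<in> optR A M \<pi> X" using XdA r0 dM \<pi>_scale[OF WM(1)] WM(2)
              by (simp add: optR_def \<rho>_def)
            have ne: "\<delta> *\<^sub>R W \<noteq> 0" using \<delta>(1) W0 by simp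
            obtain x where "optR A M \<pi> X = {x}" using a card_1_singletonE by blast
            then show False using o1 o2 ne by (metis singletonD)
          qed
        qed
      qed
    qed
  next
    assume b: "\<forall>X \<in> frontier A \<inter> frontier AK. K \<inter> (\<Inter>i\<in>active_set A m \<phi> X. {Y. \<phi> i Y = 0}) = {0}"
    show "\<forall>X. card (optR A M \<pi> X) = 1"
    proof
      fix X
      obtain B where B: "B \<subseteq> M" "independent B" "M \<subseteq> span B" "card B = dim M" by (rule basis_exists)
      have finB: "finite B" using B(4) M_dim card.infinite by fastforce
      have spanB: "span B = M" using B(1,3) span_minimal[OF B(1) M_sub] by blast
      obtain Z0 where Z0: "Z0 \<in> M" "X + Z0 \<in> A" using A3(1)[of X] by blast
      obtain L where L: "\<And>v. v \<in> {\<pi> Z | Z. Z \<in> M \<and> X + Z \<in> A} \<Longrightarrow> L \<le> v"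
        using A3(2)[of X] unfolding bdd_below_def by blast
      have "\<exists>u\<in>span B. (\<forall>j\<in>{1..m}. \<phi> j (X+u) \<ge> \<alpha> j) \<and>
           (\<forall>v\<in>span B. (\<forall>j\<in>{1..m}. \<phi> j (X+v) \<ge> \<alpha> j) \<longrightarrow> \<pi> u \<le> \<pi> v)"
      proof (rule lp_attain[OF finB])
        show "finite {1..m}" by simp
        show "\<forall>j\<in>{1..m}. linear (\<phi> j)" using \<phi>lin by blast
        show "\<forall>x\<in>span B. \<forall>y\<in>span B. \<pi> (x+y) = \<pi> x + \<pi> y" using \<pi>_add spanB by blast
        show "\<forall>c. \<forall>x\<in>span B. \<pi> (c *\<^sub>R x) = c * \<pi> x" using \<pi>_scale spanB by blast
        show "Z0 \<in> span B" using Z0 spanB by blast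
        show "\<forall>j\<in>{1..m}. \<phi> j (X + Z0) \<ge> \<alpha> j" using Z0 Aiff by blast
        show "\<forall>u\<in>span B. (\<forall>j\<in>{1..m}. \<phi> j (X+u) \<ge> \<alpha> j) \<longrightarrow> \<pi> u \<ge> L"
          using L spanB Aiff by blast
      qed
      then obtain Zs where Zs: "Zs \<in> M" "X + Zs \<in> A" "\<And>v. v \<in> M \<Longrightarrow> X + v \<in> A \<Longrightarrow> \<pi> Zs \<le> \<pi> v"
        using spanB Aiff by auto
      have rZ: "\<rho> X = \<pi> Zs" unfolding \<rho>_def rho_def
        using Zs by (intro cInf_eq_minimum) auto
      have uniq: "Z = Zs" if Z: "Z \<in> optR A M \<pi> X" for Z
      proof -
        have ZM: "Z \<in> M" "X + Z \<in> A" "\<pi> Z = \<rho> X" using Z by (auto simp: optR_def \<rho>_def)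
        define Zm where "Zm = (1/2) *\<^sub>R (Zs + Z)"
        have ZmM: "Zm \<in> M" unfolding Zm_def using ZM Zs M_sub by (simp add: subspace_add subspace_scale)
        have \<pi>Zm: "\<pi> Zm = \<rho> X" unfolding Zm_def
          using \<pi>_scale[of "Zs + Z" "1/2"] \<pi>_add[OF Zs(1) ZM(1)] ZM rZ Zs(1) M_sub
          by (simp add: subspace_add)
        define Y where "Y = X + Zm"
        have \<phi>Y: "\<phi> i Y = (\<phi> i (X + Zs) + \<phi> i (X + Z)) / 2" if i: "i \<in> {1..m}" for i
          using \<phi>lin[OF i] unfolding Y_def Zm_def
          by (simp add: linear_add linear_scale field_simps)
        have YA: "Y \<in> A" unfolding Aiff
        proof
          fix i assume i: "i \<in> {1..m}"
          have "\<phi> i (X + Zs) \<ge> \<alpha> i" "\<phi> i (X + Z) \<ge> \<alpha> i" using Zs(2) ZM(2) Aiff i by blast+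
          then show "\<phi> i Y \<ge> \<alpha> i" using \<phi>Y[OF i] by (simp add: field_simps)
        qed
        have nint: "Y \<notin> interior AK"
        proof
          assume "Y \<in> interior AK"
          then obtain Z' where Z': "Z' \<in> M" "Y + Z' \<in> A" "\<pi> Z' < 0" using int_neg by blast
          have "X + (Zm + Z') \<in> A" using Z'(2) by (simp add: Y_def add.assoc)
          moreover have "Zm + Z' \<in> M" using ZmM Z'(1) M_sub by (simp add: subspace_add)
          ultimately have "\<rho> X \<le> \<pi> (Zm + Z')" using F1 by blast
          then show False using \<pi>_add[OF ZmM Z'(1)] \<pi>Zm Z'(3) by linarith
        qed
        have "interior A \<subseteq> interior AK" using AAK by (rule interior_mono)
        then have "Y \<in> frontier A \<inter> frontier AK"
          using nint YA AAK closure_subset by (auto simp: frontier_def)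
        then have bY: "K \<inter> (\<Inter>i\<in>active_set A m \<phi> Y. {Y. \<phi> i Y = 0}) = {0}" using b by blast
        define W where "W = Z - Zs"
        have WM: "W \<in> M" unfolding W_def using ZM Zs M_sub by (simp add: subspace_diff)
        have "\<pi> W = 0" unfolding W_def using \<pi>diff[OF ZM(1) Zs(1)] ZM(3) rZ by simp
        then have WK: "W \<in> K" using WM by (simp add: K_def kerM_def)
        have "\<phi> i W = 0" if i: "i \<in> active_set A m \<phi> Y" for i
        proof -
          have i1: "i \<in> {1..m}" and eq: "\<phi> i Y = supp_fun A (\<phi> i)" using i by (auto simp: active_set_def)
          have "supp_fun A (\<phi> i) \<le> \<phi> i (X + Zs)" "supp_fun A (\<phi> i) \<le> \<phi> i (X + Z)"
            using supp_lower[OF i1] Zs(2) ZM(2) by blast+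
          moreover have "\<phi> i (X + Zs) + \<phi> i (X + Z) = 2 * supp_fun A (\<phi> i)"
            using \<phi>Y[OF i1] eq by (simp add: field_simps)
          ultimately have "\<phi> i (X + Zs) = \<phi> i (X + Z)" by linarith
          then show ?thesis unfolding W_def using \<phi>lin[OF i1] by (simp add: linear_add linear_diff)
        qed
        then have "W \<in> {0}" using WK bY by blast
        then show ?thesis by (simp add: W_def)
      qed
      have "optR A M \<pi> X = {Zs}"
        using uniq Zs rZ by (auto simp: optR_def \<rho>_def)
      then show "card (optR A M \<pi> X) = 1" by simp
    qed
  qed
qed

end
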